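(* Consider online binary classification with abstention with $d$ experts and arbitrary abstention costs $c_t$, and run AdaHedge with abstention. Then for every expert $i\in\{1,\dots,d\}$, $$\sum_{t=1}^T\big((1-b_t)\ell_t(y_t^\star)+b_tc_t\big)\le\sum_{t=1}^T\ell_t(y_t^i)+\inf_{\eta>0}\Big\{\frac{\ln d}{\eta}+\sum_{t=1}^T\big((1-b_t)\ell_t(y_t^\star)+c_tb_t+\eta v_t-\ell_t(\hat y_t)\big)\Big\}+\frac43\ln d+2,$$ where $v_t=\mathbb E_{i\sim\hat{\mathbf p}_t}\big[(\ell_t(\hat y_t)-\ell_t(y_t^i))^2\big]$.
   Context: Online classification with abstention: in each round $t=1,\dots,T$, the learner observes expert predictions $y_t^1,\dots,y_t^d\in[-1,1]$, predicts $y'_t\in[-1,1]\cup\{*\}$ ($*$ = abstain), the environment reveals $y_t\in\{-1,1\}$ and an abstention cost $c_t$, and the learner suffers $\ell_t(y'_t)=\frac12(1-y_ty'_t)$ if $y'_t\in[-1,1]$ and $c_t$ if $y'_t=*$. For expert $i$ its loss is $\ell_t(y_t^i)=\frac12(1-y_ty_t^i)\in[0,1]$. AdaHedge: with $L_{t,i}=\sum_{s<t}\ell_s(y_s^i)$, weights $\hat p_{t,i}\propto\exp(-\eta_tL_{t,i})$, where $\eta_t=\ln d/\Delta_{t-1}$ (and for $\Delta_{t-1}=0$ the weights are uniform over the experts minimizing $L_{t,i}$), $\Delta_t=\sum_{s\le t}\delta_s$, $\delta_s=h_s-m_s$, $h_s=\sum_i\hat p_{s,i}\ell_s(y_s^i)$,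 $m_s=-\frac1{\eta_s}\ln\sum_i\hat p_{s,i}e^{-\eta_s\ell_s(y_s^i)}$ (with $m_s=\min_{i:\hat p_{s,i}>0}\ell_s(y_s^i)$ when $\eta_s=\infty$). AdaHedge with abstention (Algorithm 2): in round $t$ obtain $\hat{\mathbf p}_t$ from AdaHedge, set $\hat y_t=\sum_i\hat p_{t,i}y_t^i$, $y_t^\star=\mathrm{sign}(\hat y_t)$, $b_t=1-|\hat y_t|$; predict $y'_t=y_t^\star$ with probability $1-b_t$ and abstain with probability $b_t$; then feed the expert losses $\ell_t(y_t^i)$ to AdaHedge. The quantity $(1-b_t)\ell_t(y_t^\star)+b_tc_t$ is the learner's expected loss in round $t$. *)

theory Defs
  imports Complex_Main
begin

text \<open>Experts are indexed by 0,...,d-1; rounds by 1,...,T.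
  The learner/expert classification loss: l(y, z) = (1 - y z)/2.\<close>

definition clf_loss :: "real \<Rightarrow> real \<Rightarrow> real" where
  "clf_loss y z = (1 - y * z) / 2"

definition cum_loss :: "(nat \<Rightarrow> nat \<Rightarrow> real) \<Rightarrow> nat \<Rightarrow> nat \<Rightarrow> real" where
  "cum_loss lossf t i = (\<Sum>s\<in>{1..<t}. lossf s i)"

text \<open>AdaHedge weights given the cumulative losses L and the value D = Delta_{t-1}:
  eta = ln d / D, and for D = 0 (eta = infinity) uniform over the minimizers of L.\<close>
definition ah_weights :: "nat \<Rightarrow> (nat \<Rightarrow> real) \<Rightarrow> real \<Rightarrow> nat \<Rightarrow> real" where
  "ah_weights d L D i =
     (if D = 0 then
        (let M = {j\<in>{..<d}. L j = (MIN k\<in>{..<d}. L k)}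
         in if i \<in> M then 1 / real (card M) else 0)
      else exp (- (ln (real d) / D) * L i) / (\<Sum>j<d. exp (- (ln (real d) / D) * L j)))"

definition ah_hedge :: "nat \<Rightarrow> (nat \<Rightarrow> real) \<Rightarrow> (nat \<Rightarrow> real) \<Rightarrow> real" where
  "ah_hedge d p l = (\<Sum>i<d. p i * l i)"

text \<open>Mix loss m = -(1/eta) ln sum_i p_i exp(-eta l_i), with eta = ln d / D;
  for D = 0 (eta = infinity) it is the minimum of l_i over i with p_i > 0.\<close>
definition ah_mix :: "nat \<Rightarrow> (nat \<Rightarrow> real) \<Rightarrow> (nat \<Rightarrow> real) \<Rightarrow> real \<Rightarrow> real" where
  "ah_mix d p l D =
     (if D = 0 then (MIN i\<in>{i\<in>{..<d}. p i > 0}. l i)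
      else - (1 / (ln (real d) / D)) * ln (\<Sum>i<d. p i * exp (- (ln (real d) / D) * l i)))"

text \<open>Delta_t = sum_{s<=t} delta_s, where round s = t+1 uses Delta_t.\<close>
primrec ah_Delta :: "nat \<Rightarrow> (nat \<Rightarrow> nat \<Rightarrow> real) \<Rightarrow> nat \<Rightarrow> real" where
  "ah_Delta d lossf 0 = 0"
| "ah_Delta d lossf (Suc t) =
     (let D = ah_Delta d lossf t;
          p = ah_weights d (cum_loss lossf (Suc t)) D;
          l = lossf (Suc t)
      in D + (ah_hedge d p l - ah_mix d p l D))"

definition ah_p :: "nat \<Rightarrow> (nat \<Rightarrow> nat \<Rightarrow> real) \<Rightarrow> nat \<Rightarrow> nat \<Rightarrow> real" where
  "ah_p d lossf t = ah_weights d (cum_loss lossf t) (ah_Delta d lossf (t - 1))"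

definition exp_loss :: "(nat \<Rightarrow> nat \<Rightarrow> real) \<Rightarrow> (nat \<Rightarrow> real) \<Rightarrow> nat \<Rightarrow> nat \<Rightarrow> real" where
  "exp_loss ys y t j = clf_loss (y t) (ys t j)"

definition aha_p :: "nat \<Rightarrow> (nat \<Rightarrow> nat \<Rightarrow> real) \<Rightarrow> (nat \<Rightarrow> real) \<Rightarrow> nat \<Rightarrow> nat \<Rightarrow> real" where
  "aha_p d ys y = ah_p d (exp_loss ys y)"

definition aha_yhat :: "nat \<Rightarrow> (nat \<Rightarrow> nat \<Rightarrow> real) \<Rightarrow> (nat \<Rightarrow> real) \<Rightarrow> nat \<Rightarrow> real" where
  "aha_yhat d ys y t = (\<Sum>j<d. aha_p d ys y t j * ys t j)"

definition aha_ystar :: "nat \<Rightarrow> (nat \<Rightarrow> nat \<Rightarrow> real) \<Rightarrow> (nat \<Rightarrow> real) \<Rightarrow> nat \<Rightarrow> real" where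
  "aha_ystar d ys y t = sgn (aha_yhat d ys y t)"

definition aha_b :: "nat \<Rightarrow> (nat \<Rightarrow> nat \<Rightarrow> real) \<Rightarrow> (nat \<Rightarrow> real) \<Rightarrow> nat \<Rightarrow> real" where
  "aha_b d ys y t = 1 - \<bar>aha_yhat d ys y t\<bar>"

definition aha_v :: "nat \<Rightarrow> (nat \<Rightarrow> nat \<Rightarrow> real) \<Rightarrow> (nat \<Rightarrow> real) \<Rightarrow> nat \<Rightarrow> real" where
  "aha_v d ys y t = (\<Sum>j<d. aha_p d ys y t j *
      (clf_loss (y t) (aha_yhat d ys y t) - exp_loss ys y t j)\<^sup>2)"

end

theory Submission
  imports Defs "HOL-Analysis.Convex"
begin

lemma fact_bound: "2 * 3 ^ n \<le> (fact (n + 2) :: real)"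
proof (induction n)
  case 0 then show ?case by simp
next
  case (Suc n)
  have "fact (Suc n + 2) = real (n + 3) * fact (n + 2)"
    by (simp add: fact_Suc algebra_simps)
  also have "\<dots> \<ge> 3 * fact (n+2)"
    by (intro mult_right_mono) auto
  finally have a: "3 * fact (n+2) \<le> (fact (Suc n + 2) :: real)" .
  have "(2::real) * 3 ^ Suc n = 3 * (2 * 3 ^ n)" by simp
  with a Suc show ?case by linarith
qed

lemma exp_bern_pos:
  fixes x :: real assumes "0 \<le> x" "x < 3"
  shows "exp x \<le> 1 + x + x\<^sup>2 / (2 * (1 - x / 3))"
proof -
  have s1: "summable (\<lambda>n. inverse (fact (n + 2)) * x ^ (n + 2))"
    using summable_ignore_initial_segment[OF summable_exp[of x], of 2] by simp
  have g: "norm (x/3) < 1" using assms by simp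
  have s2: "summable (\<lambda>n. x\<^sup>2 / 2 * (x / 3) ^ n)"
    by (intro summable_mult summable_geometric g)
  have le: "inverse (fact (n + 2)) * x ^ (n + 2) \<le> x\<^sup>2 / 2 * (x / 3) ^ n" for n
  proof -
        have "inverse (fact (n + 2)) * x ^ (n + 2) = x ^ (n+2) / fact (n+2)"
      by (simp add: field_simps)
    also have "\<dots> \<le> x ^ (n+2) / (2 * 3 ^ n)"
      by (intro divide_left_mono fact_bound) (use assms in auto)
    also have "\<dots> = x\<^sup>2 / 2 * (x / 3) ^ n"
      by (simp add: power_add power_divide field_simps power2_eq_square)
    finally show ?thesis .
  qed
  have "(\<Sum>n. inverse (fact (n + 2)) * x ^ (n + 2)) \<le> (\<Sum>n. x\<^sup>2 / 2 * (x / 3) ^ n)"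
    by (intro suminf_le le s1 s2)
  also have "\<dots> = x\<^sup>2 / 2 * (1 / (1 - x/3))"
    using suminf_geometric[OF g] suminf_mult[OF summable_geometric[OF g], of "x\<^sup>2/2"] by simp
  also have "\<dots> = x\<^sup>2 / (2 * (1 - x / 3))" by simp
  finally show ?thesis using exp_first_two_terms[of x] by simp
qed

lemma exp_bern:
  fixes x c :: real assumes "x \<le> c" "0 < c" "c < 3"
  shows "exp x \<le> 1 + x + x\<^sup>2 / (2 * (1 - c / 3))"
proof (cases "x \<le> 0")
  case True
  obtain t where "exp x = (\<Sum>m<3. x ^ m / fact m) + exp t / fact 3 * x ^ 3"
    using Maclaurin_exp_le[of x 3] by blast
  moreover have "exp t / fact 3 * x ^ 3 \<le> 0"
    using True by (intro mult_nonneg_nonpos) (auto simp: power_odd_eq)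
  ultimately have "exp x \<le> 1 + x + x\<^sup>2 / 2"
    by (simp add: numeral_3_eq_3 power2_eq_square)
  also have "x\<^sup>2 / 2 \<le> x\<^sup>2 / (2 * (1 - c / 3))"
    using assms by (intro divide_left_mono) auto
  finally show ?thesis by simp
next
  case False
  then have "exp x \<le> 1 + x + x\<^sup>2 / (2 * (1 - x / 3))"
    using assms by (intro exp_bern_pos) auto
  also have "x\<^sup>2 / (2 * (1 - x / 3)) \<le> x\<^sup>2 / (2 * (1 - c / 3))"
    using assms False by (intro divide_left_mono) auto
  finally show ?thesis by simp
qed

lemma weights_nonneg: "0 \<le> ah_weights d L D k"
  by (auto simp: ah_weights_def Let_def intro!: divide_nonneg_nonneg sum_nonneg)

lemma weights_sum: assumes "d \<ge> 1" shows "(\<Sum>k<d. ah_weights d L D k) = 1"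
proof (cases "D = 0")
  case True
  define M where "M = {j\<in>{..<d}. L j = (MIN k\<in>{..<d}. L k)}"
  have ne: "L ` {..<d} \<noteq> {}" using assms by (auto simp: lessThan_empty_iff)
  obtain j where j: "j < d" "L j = (MIN k\<in>{..<d}. L k)"
    using Min_in[OF _ ne] by auto
  have fin: "finite M" and sub: "M \<subseteq> {..<d}" by (auto simp: M_def)
  have "M \<noteq> {}" using j by (auto simp: M_def)
  then have cM: "card M > 0" using fin by (simp add: card_gt_0_iff)
  have "(\<Sum>k<d. ah_weights d L D k) = (\<Sum>k<d. if k \<in> M then 1 / real (card M) else 0)"
    unfolding ah_weights_def Let_def M_def using True by simp
  also have "\<dots> = (\<Sum>k\<in>{..<d} \<inter> M. 1 / real (card M))"
    using sum.inter_restrict[of "{..<d}" "\<lambda>k. 1/real(card M)" M] by simp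
  also have "{..<d} \<inter> M = M" using sub by auto
  finally show ?thesis using cM by simp
next
  case False
  have pos: "(\<Sum>j<d. exp (- (ln (real d) / D) * L j)) > 0"
    using assms by (intro sum_pos) (auto simp: lessThan_empty_iff)
  have "(\<Sum>k<d. ah_weights d L D k) =
    (\<Sum>k<d. exp (- (ln (real d) / D) * L k)) / (\<Sum>j<d. exp (- (ln (real d) / D) * L j))"
    using False by (simp add: ah_weights_def sum_divide_distrib[symmetric])
  then show ?thesis using pos by simp
qed

definition Phi :: "nat \<Rightarrow> real \<Rightarrow> (nat \<Rightarrow> real) \<Rightarrow> real" where
  "Phi d D L = (if D = 0 then Min (L ` {..<d})
     else - (D / ln (real d)) * ln ((\<Sum>k<d. exp (- (ln (real d) / D) * L k)) / real d))"

lemma Phi_ge_min: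
  assumes "d \<ge> 2" "D > 0"
  shows "Min (L ` {..<d}) \<le> Phi d D L"
proof -
  define \<eta> where "\<eta> = ln (real d) / D"
  define mn where "mn = Min (L ` {..<d})"
  have ld: "ln (real d) > 0" using assms by simp
  have eta: "\<eta> > 0" using ld assms by (simp add: \<eta>_def)
  have mnle: "mn \<le> L k" if "k < d" for k using that by (simp add: mn_def)
  have "(\<Sum>k<d. exp (- \<eta> * L k)) \<le> (\<Sum>k<d. exp (- \<eta> * mn))"
    using mnle eta by (intro sum_mono) (simp add: mult_left_mono)
  also have "\<dots> = real d * exp (- \<eta> * mn)" by simp
  finally have "(\<Sum>k<d. exp (- \<eta> * L k)) / real d \<le> exp (- \<eta> * mn)"
    using assms by (simp add: field_simps)
  moreover have "(\<Sum>k<d. exp (- \<eta> * L k)) / real d > 0"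
    using assms by (intro divide_pos_pos sum_pos) (auto simp: lessThan_empty_iff)
  ultimately have "ln ((\<Sum>k<d. exp (- \<eta> * L k)) / real d) \<le> - \<eta> * mn"
    by (metis ln_exp ln_le_cancel_iff exp_gt_zero)
  then have "- (1/\<eta>) * ln ((\<Sum>k<d. exp (- \<eta> * L k)) / real d) \<ge> - (1/\<eta>) * (- \<eta> * mn)"
    using eta by (intro mult_left_mono_neg) auto
  then show ?thesis using eta assms ld
    by (simp add: Phi_def \<eta>_def mn_def)
qed

lemma Phi_le_min:
  assumes "d \<ge> 2" "D > 0"
  shows "Phi d D L \<le> Min (L ` {..<d}) + D"
proof -
  define \<eta> where "\<eta> = ln (real d) / D"
  define mn where "mn = Min (L ` {..<d})"
  have ld: "ln (real d) > 0" using assms by simp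
  have eta: "\<eta> > 0" using ld assms by (simp add: \<eta>_def)
  have ne: "L ` {..<d} \<noteq> {}" using assms by (auto simp: lessThan_empty_iff)
  obtain j where j: "j < d" "L j = mn"
    using Min_in[OF _ ne] by (auto simp: mn_def)
  have "exp (- \<eta> * mn) \<le> (\<Sum>k<d. exp (- \<eta> * L k))"
    using j member_le_sum[of j "{..<d}" "\<lambda>k. exp (- \<eta> * L k)"] by auto
  then have "exp (- \<eta> * mn) / real d \<le> (\<Sum>k<d. exp (- \<eta> * L k)) / real d"
    by (simp add: divide_right_mono)
  then have "ln (exp (- \<eta> * mn) / real d) \<le> ln ((\<Sum>k<d. exp (- \<eta> * L k)) / real d)"
    using assms by (intro ln_mono) auto
  moreover have "ln (exp (- \<eta> * mn) / real d) = - \<eta> * mn - ln (real d)"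
    using assms by (simp add: ln_div)
  ultimately have "- (1/\<eta>) * ln ((\<Sum>k<d. exp (- \<eta> * L k)) / real d) \<le> - (1/\<eta>) * (- \<eta> * mn - ln (real d))"
    using eta by (intro mult_left_mono_neg) auto
  also have "\<dots> = mn + ln (real d) / \<eta>" using eta by (simp add: field_simps)
  also have "ln (real d) / \<eta> = D" using ld assms by (simp add: \<eta>_def)
  finally show ?thesis using eta assms ld
    by (simp add: Phi_def \<eta>_def mn_def)
qed

lemma Phi_mono_pos:
  assumes "d \<ge> 2" "0 < D1" "D1 \<le> D2"
  shows "Phi d D1 L \<le> Phi d D2 L"
proof -
  define e1 where "e1 = ln (real d) / D1"
  define e2 where "e2 = ln (real d) / D2"
  have ld: "ln (real d) > 0" using assms by simp
  have e2: "e2 > 0" using ld assms by (simp add: e2_def)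
  have e12: "e2 \<le> e1" unfolding e1_def e2_def using ld assms
    by (intro divide_left_mono) auto
  define r where "r = e1 / e2"
  have r: "r \<ge> 1" using e2 e12 by (simp add: r_def)
  define b where "b k = exp (- e2 * L k)" for k
  have bpos: "b k > 0" for k by (simp add: b_def)
  have bp: "b k powr r = exp (- e1 * L k)" for k
    using e2 by (simp add: b_def powr_def r_def field_simps)
  have dne: "{..<d} \<noteq> {}" using assms by (auto simp: lessThan_empty_iff)
  have "(\<Sum>k\<in>{..<d}. (1 / real d) *\<^sub>R b k) powr r \<le> (\<Sum>k\<in>{..<d}. (1 / real d) * b k powr r)"
    by (rule convex_on_sum[OF _ dne powr_convex[OF r]]) (use assms bpos in auto)
  then have J: "((\<Sum>k<d. b k) / real d) powr r \<le> (\<Sum>k<d. exp (- e1 * L k)) / real d"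
    by (simp add: bp sum_divide_distrib[symmetric] sum_distrib_left[symmetric])
  have A2: "(\<Sum>k<d. b k) / real d > 0" using assms bpos by (intro divide_pos_pos sum_pos) (auto simp: lessThan_empty_iff)
  have "ln (((\<Sum>k<d. b k) / real d) powr r) \<le> ln ((\<Sum>k<d. exp (- e1 * L k)) / real d)"
    using J A2 assms by (intro ln_mono) auto
  then have "r * ln ((\<Sum>k<d. b k) / real d) \<le> ln ((\<Sum>k<d. exp (- e1 * L k)) / real d)"
    using A2 by simp
  then have "- (1/e1) * ln ((\<Sum>k<d. exp (- e1 * L k)) / real d) \<le> - (1/e1) * (r * ln ((\<Sum>k<d. b k) / real d))"
    using e2 e12 by (intro mult_left_mono_neg) auto
  also have "- (1/e1) * (r * ln ((\<Sum>k<d. b k) / real d)) = - (1/e2) * ln ((\<Sum>k<d. b k) / real d)"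
    using e2 e12 by (simp add: r_def)
  finally show ?thesis using assms ld
    by (simp add: Phi_def e1_def e2_def b_def)
qed

lemma round_zero:
  assumes d1: "d \<ge> 1" and Lc: "\<And>k. k<d \<Longrightarrow> L k = L 0"
    and lb: "\<And>k. k<d \<Longrightarrow> 0 \<le> l k \<and> l k \<le> 1"
    and p_def: "p = ah_weights d L 0" and h_def: "h = ah_hedge d p l" and m_def: "m = ah_mix d p l 0"
    and v_def: "v = (\<Sum>k<d. p k * (h - l k)\<^sup>2)"
  shows "0 \<le> h - m" "h - m \<le> 1"
    "2*(h-m)*0 + (h-m)\<^sup>2 \<le> ln (real d) * v + (2/3*ln (real d) + 1)*(h-m)"
    "m = Phi d 0 (\<lambda>k. L k + l k) - Phi d 0 L"
    "h - m = 0 \<Longrightarrow> \<forall>k<d. L k + l k = L 0 + l 0"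
    "d = 1 \<Longrightarrow> h - m = 0"
proof -
  have dne: "{..<d} \<noteq> {}" using d1 by (auto simp: lessThan_empty_iff)
  obtain c where Lc': "\<And>k. k<d \<Longrightarrow> L k = c" using Lc by blast
  have L0: "L 0 = c" using Lc' d1 by simp
  have img: "L ` {..<d} = {c}" using Lc' dne by auto
  have Lmin: "Min (L ` {..<d}) = c" using img by simp
  have M: "{j\<in>{..<d}. L j = (MIN k\<in>{..<d}. L k)} = {..<d}" using Lc' Lmin by auto
  have pk: "p k = 1 / real d" if "k < d" for k
    using that M by (simp add: p_def ah_weights_def Let_def)
  have sup: "{i\<in>{..<d}. p i > 0} = {..<d}" using pk d1 by auto
  define mn where "mn = Min (l ` {..<d})"
  have mnle: "mn \<le> l k" if "k < d" for k using that by (simp add: mn_def)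
  have "mn \<in> l ` {..<d}" unfolding mn_def by (rule Min_in) (use dne in auto)
  then obtain j where j: "j < d" "l j = mn" by auto
  have m: "m = mn" unfolding m_def ah_mix_def mn_def if_True sup by simp
  have h: "h = (\<Sum>k<d. l k) / real d"
    by (simp add: h_def ah_hedge_def pk sum_divide_distrib)
  have "(\<Sum>k<d. l k) \<ge> (\<Sum>k<d. mn)" by (intro sum_mono mnle) auto
  then have hm: "h \<ge> m" using d1 by (simp add: h m field_simps)
  have "(\<Sum>k<d. l k) \<le> (\<Sum>k<d. 1)" using lb by (intro sum_mono) auto
  then have h1: "h \<le> 1" using d1 by (simp add: h field_simps)
  have m0: "m \<ge> 0" using m j lb by force
  show 1: "0 \<le> h - m" using hm by simp
  show 2: "h - m \<le> 1" using h1 m0 by simp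
  have v0: "v \<ge> 0" unfolding v_def using weights_nonneg[of d L 0 ] by (intro sum_nonneg) (simp add: p_def)
  have ld: "ln (real d) \<ge> 0" using d1 by simp
  have "(h-m)\<^sup>2 \<le> (h - m)" using 1 2 by (simp add: power2_eq_square mult_left_le)
  also have "\<dots> \<le> ln (real d) * v + (2/3*ln (real d) + 1)*(h-m)"
  proof -
    have "0 \<le> ln (real d) * v" using ld v0 by simp
    moreover have "0 \<le> 2/3*ln (real d) * (h-m)" using ld 1 by simp
    ultimately show ?thesis by (simp add: algebra_simps)
  qed
  finally show "2*(h-m)*0 + (h-m)\<^sup>2 \<le> ln (real d) * v + (2/3*ln (real d) + 1)*(h-m)" by simp
  have "Min ((\<lambda>k. L k + l k) ` {..<d}) = c + mn"
    by (rule Min_eqI) (use Lc' mnle j in auto)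
  then show "m = Phi d 0 (\<lambda>k. L k + l k) - Phi d 0 L"
    by (simp add: Phi_def Lmin m)
  show "\<forall>k<d. L k + l k = L 0 + l 0" if "h - m = 0"
  proof -
    have "(\<Sum>k<d. l k - mn) = (\<Sum>k<d. l k) - real d * mn" by (simp add: sum_subtractf)
    also have "\<dots> = 0" using that d1 by (simp add: h m field_simps)
    finally have "\<forall>k\<in>{..<d}. l k - mn = 0"
      using mnle by (subst sum_nonneg_eq_0_iff[symmetric]) auto
    then show ?thesis using Lc' L0 d1 by auto
  qed
  show "h - m = 0" if "d = 1"
  proof -
    have "mn = l 0" using that mnle j by force
    then show ?thesis using that by (simp add: h m)
  qed
qed

lemma round_pos:
  assumes d2: "d \<ge> 2" and Dp: "D > 0"
    and lb: "\<And>k. k<d \<Longrightarrow> 0 \<le> l k \<and> l k \<le> 1"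
    and p_def: "p = ah_weights d L D" and h_def: "h = ah_hedge d p l" and m_def: "m = ah_mix d p l D"
    and v_def: "v = (\<Sum>k<d. p k * (h - l k)\<^sup>2)"
  shows "0 \<le> h - m" "h - m \<le> 1"
    "2*(h-m)*D + (h-m)\<^sup>2 \<le> ln (real d) * v + (2/3*ln (real d) + 1)*(h-m)"
    "m = Phi d D (\<lambda>k. L k + l k) - Phi d D L"
proof -
  have d1: "d \<ge> 1" using d2 by simp
  have dne: "{..<d} \<noteq> {}" using d1 by (auto simp: lessThan_empty_iff)
  define \<eta> where "\<eta> = ln (real d) / D"
  have ld: "ln (real d) > 0" using d2 by simp
  have eta: "\<eta> > 0" using ld Dp by (simp add: \<eta>_def)
  have Deta: "D = ln (real d) / \<eta>" using ld Dp eta by (simp add: \<eta>_def)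
  have e1: "ln (real d) / D = \<eta>" by (simp add: \<eta>_def)
  have e2: "D / ln (real d) = 1 / \<eta>" by (simp add: \<eta>_def)
  have e3: "1 / (ln (real d) / D) = 1 / \<eta>" by (simp add: \<eta>_def)
  define S where "S = (\<Sum>j<d. exp (- \<eta> * L j))"
  have S: "S > 0" unfolding S_def using dne by (intro sum_pos) auto
  have pk: "p k = exp (- \<eta> * L k) / S" for k
    using Dp unfolding p_def ah_weights_def e1 S_def by simp
  have p0: "p k \<ge> 0" for k using weights_nonneg p_def by simp
  have p1: "(\<Sum>k<d. p k) = 1" using weights_sum[OF d1] p_def by simp
  define E where "E = (\<Sum>k<d. p k * exp (- \<eta> * l k))"
  have m: "m = - (1/\<eta>) * ln E"
    using Dp unfolding m_def ah_mix_def e1 e3 E_def by simp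
  have h: "h = (\<Sum>k<d. p k * l k)" by (simp add: h_def ah_hedge_def)
  have "(\<Sum>k<d. p k * exp (- \<eta>)) \<le> E" unfolding E_def
    using p0 lb eta by (intro sum_mono mult_left_mono) auto
  then have E0: "E > 0" using p1 by (simp add: sum_distrib_right[symmetric]) (smt (verit) exp_gt_zero)
  have "E \<le> (\<Sum>k<d. p k * 1)" unfolding E_def
    using p0 lb eta by (intro sum_mono mult_left_mono) auto
  then have E1: "E \<le> 1" using p1 by simp
  have "ln E \<le> 0" using E0 E1 by simp
  then have m0: "m \<ge> 0" using eta by (simp add: m divide_nonpos_pos)
  have "h \<le> (\<Sum>k<d. p k * 1)" unfolding h using p0 lb by (intro sum_mono mult_left_mono) auto
  then have h1: "h \<le> 1" using p1 by simp
  have "exp (\<Sum>k\<in>{..<d}. p k *\<^sub>R (- \<eta> * l k)) \<le> (\<Sum>k\<in>{..<d}. p k * exp (- \<eta> * l k))"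
    by (rule convex_on_sum[OF _ dne exp_convex]) (use p1 p0 in auto)
  moreover have "(\<Sum>k\<in>{..<d}. p k *\<^sub>R (- \<eta> * l k)) = - \<eta> * h"
    by (simp add: h sum_distrib_left algebra_simps)
  ultimately have "exp (- \<eta> * h) \<le> E" by (simp add: E_def)
  then have "- \<eta> * h \<le> ln E" using E0 by (metis ln_exp ln_le_cancel_iff exp_gt_zero)
  then have "- (1/\<eta>) * ln E \<le> - (1/\<eta>) * (- \<eta> * h)"
    using eta by (intro mult_left_mono_neg) auto
  then have hm: "m \<le> h" using eta by (simp add: m)
  show 1: "0 \<le> h - m" using hm by simp
  show 2: "h - m \<le> 1" using h1 m0 by simp
  define F where "F = (\<Sum>k<d. p k * exp (\<eta> * (h - l k)))"
  have EF: "E = exp (- \<eta> * h) * F"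
    unfolding E_def F_def sum_distrib_left
    by (intro sum.cong refl) (simp add: algebra_simps exp_add[symmetric])
  have F0: "F > 0" using EF E0 by (simp add: zero_less_mult_iff)
  have delta: "h - m = (1/\<eta>) * ln F"
    using eta F0 by (simp add: m EF ln_mult field_simps)
  have sq: "(h-m)\<^sup>2 \<le> h - m" using 1 2 by (simp add: power2_eq_square mult_left_le)
  have v0: "v \<ge> 0" unfolding v_def using p0 by (intro sum_nonneg) simp
  show "2*(h-m)*D + (h-m)\<^sup>2 \<le> ln (real d) * v + (2/3*ln (real d) + 1)*(h-m)"
  proof (cases "\<eta> \<ge> 3")
    case True
    have "2*(h-m)*D = 2*(h-m) * ln (real d) / \<eta>" by (simp add: Deta)
    also have "\<dots> \<le> 2*(h-m) * ln (real d) / 3"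
      using True 1 ld by (intro divide_left_mono) auto
    finally have "2*(h-m)*D \<le> 2/3 * ln (real d) * (h - m)" by (simp add: algebra_simps)
    moreover have "0 \<le> ln (real d) * v" using ld v0 by simp
    moreover have "(2/3*ln (real d) + 1)*(h-m) = 2/3 * ln (real d) * (h - m) + (h-m)" by (simp add: algebra_simps)
    ultimately show ?thesis using sq by linarith
  next
    case False
    define c where "c = 2 * (1 - \<eta> / 3)"
    have c: "c > 0" using False by (simp add: c_def)
    have "F \<le> (\<Sum>k<d. p k * (1 + \<eta> * (h - l k) + (\<eta> * (h - l k))\<^sup>2 / c))"
      unfolding F_def c_def
    proof (intro sum_mono mult_left_mono)
      fix k assume k: "k \<in> {..<d}"
      have "h - l k \<le> 1" using lb[of k] k hm m0 h1 by auto
      then have "\<eta> * (h - l k) \<le> \<eta>" using eta by (simp add: mult_left_le)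
      then show "exp (\<eta> * (h - l k)) \<le> 1 + \<eta> * (h - l k) + (\<eta> * (h - l k))\<^sup>2 / (2 * (1 - \<eta> / 3))"
        using eta False by (intro exp_bern) auto
    qed (use p0 in auto)
    also have "\<dots> = (\<Sum>k<d. p k) + \<eta> * (h * (\<Sum>k<d. p k) - (\<Sum>k<d. p k * l k)) + \<eta>\<^sup>2 / c * v"
    proof -
      have "(\<Sum>k<d. p k * (1 + \<eta> * (h - l k) + (\<eta> * (h - l k))\<^sup>2 / c))
         = (\<Sum>k<d. p k + \<eta> * (h * p k - p k * l k) + \<eta>\<^sup>2 / c * (p k * (h - l k)\<^sup>2))"
        using c by (intro sum.cong refl) (subst power_mult_distrib, simp add: field_simps)
      also have "\<dots> = (\<Sum>k<d. p k) + \<eta> * (h * (\<Sum>k<d. p k) - (\<Sum>k<d. p k * l k)) + \<eta>\<^sup>2 / c * v"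
        by (simp add: v_def sum.distrib sum_distrib_left sum_subtractf[symmetric] right_diff_distrib)
      finally show ?thesis .
    qed
    also have "\<dots> = 1 + \<eta>\<^sup>2 / c * v" using p1 h by simp
    finally have "F - 1 \<le> \<eta>\<^sup>2 / c * v" by simp
    then have "ln F \<le> \<eta>\<^sup>2 / c * v" using ln_le_minus_one[OF F0] by linarith
    then have "(1/\<eta>) * ln F \<le> (1/\<eta>) * (\<eta>\<^sup>2 / c * v)"
      using eta by (intro mult_left_mono) auto
    then have dv: "h - m \<le> \<eta> * v / c" using eta by (simp add: delta power2_eq_square)
    have "(h - m) * (c / \<eta>) \<le> (\<eta> * v / c) * (c / \<eta>)"
      using dv c eta by (intro mult_right_mono) auto
    then have "(h - m) * (c / \<eta>) \<le> v" using c eta by simp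
    then have "ln (real d) * ((h - m) * (c / \<eta>)) \<le> ln (real d) * v"
      using ld by (intro mult_left_mono) auto
    moreover have "ln (real d) * ((h - m) * (c / \<eta>)) = 2*(h-m)*D - 2/3*ln (real d) *(h-m)"
      using eta by (simp add: Deta c_def field_simps)
    moreover have "(2/3*ln (real d) + 1)*(h-m) = 2/3 * ln (real d) * (h - m) + (h-m)" by (simp add: algebra_simps)
    ultimately show ?thesis using sq by linarith
  qed
  define S' where "S' = (\<Sum>k<d. exp (- \<eta> * (L k + l k)))"
  have S'0: "S' > 0" unfolding S'_def using dne by (intro sum_pos) auto
  have ES: "E = S' / S"
    unfolding E_def S'_def pk sum_divide_distrib
    by (intro sum.cong refl) (simp add: algebra_simps exp_add[symmetric])
  have "ln E = ln (S' / real d) - ln (S / real d)"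
    using S S'0 d1 by (simp add: ES ln_div)
  then show "m = Phi d D (\<lambda>k. L k + l k) - Phi d D L"
  proof -
    have a: "Phi d D L = - (1/\<eta>) * ln (S / real d)"
      using Dp unfolding Phi_def e1 e2 S_def by simp
    have b: "Phi d D (\<lambda>k. L k + l k) = - (1/\<eta>) * ln (S' / real d)"
      using Dp unfolding Phi_def e1 e2 S'_def by simp
    show ?thesis unfolding a b m \<open>ln E = _\<close> by (simp add: right_diff_distrib)
  qed
qed

lemma cum_step: "n \<ge> 1 \<Longrightarrow> cum_loss lf (Suc n) k = cum_loss lf n k + lf n k"
  by (simp add: cum_loss_def atLeastLessThanSuc)

lemma cum1: "cum_loss lf 1 k = 0"
  by (simp add: cum_loss_def)

lemma Phi_mono:
  assumes "0 \<le> D1" "D1 \<le> D2" "D2 > 0 \<Longrightarrow> d \<ge> 2"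
  shows "Phi d D1 L \<le> Phi d D2 L"
proof (cases "D1 = D2")
  case True then show ?thesis by simp
next
  case False
  then have D2: "D2 > 0" "d \<ge> 2" using assms by auto
  show ?thesis
  proof (cases "D1 = 0")
    case True
    then show ?thesis using Phi_ge_min[OF D2(2) D2(1), of L] by (simp add: Phi_def)
  next
    case False
    then show ?thesis using Phi_mono_pos[OF D2(2), of D1 D2 L] assms by simp
  qed
qed

lemma sq_bound:
  fixes x a b :: real
  assumes "x \<ge> 0" "a \<ge> 0" "b \<ge> 0" "x\<^sup>2 \<le> a + b * x"
  shows "x \<le> sqrt a + b"
proof (rule ccontr)
  assume "\<not> x \<le> sqrt a + b"
  then have x: "x > sqrt a + b" by simp
  have sa: "sqrt a \<ge> 0" using assms by simp
  have x0: "x > 0" using x sa assms by linarith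
  have "x * x > x * (sqrt a + b)" using x x0 by (intro mult_strict_left_mono) auto
  moreover have "x * sqrt a \<ge> sqrt a * sqrt a" using x assms sa by (intro mult_right_mono) auto
  moreover have "sqrt a * sqrt a = a" using assms by simp
  ultimately have "x\<^sup>2 > a + b * x" by (simp add: power2_eq_square algebra_simps)
  then show False using assms by simp
qed

lemma amgm_eta:
  fixes a V e :: real
  assumes "a \<ge> 0" "V \<ge> 0" "e > 0"
  shows "2 * sqrt (a * V) \<le> a / e + e * V"
proof -
  have "0 \<le> (sqrt (a / e) - sqrt (e * V))\<^sup>2" by simp
  also have "\<dots> = a / e + e * V - 2 * (sqrt (a / e) * sqrt (e * V))"
    using assms by (simp add: power2_diff)
  also have "sqrt (a / e) * sqrt (e * V) = sqrt (a * V)"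
    using assms by (simp add: real_sqrt_mult[symmetric])
  finally show ?thesis by simp
qed

context
  fixes d T :: nat and lf :: "nat \<Rightarrow> nat \<Rightarrow> real"
  assumes d1: "d \<ge> 1" and lb: "\<And>t k. t \<in> {1..T} \<Longrightarrow> k < d \<Longrightarrow> 0 \<le> lf t k \<and> lf t k \<le> 1"
begin

abbreviation "DD t \<equiv> ah_Delta d lf t"
abbreviation "LL t \<equiv> cum_loss lf t"
abbreviation "PP t \<equiv> ah_p d lf t"
abbreviation "hh t \<equiv> ah_hedge d (PP t) (lf t)"
abbreviation "mm t \<equiv> ah_mix d (PP t) (lf t) (DD (t - 1))"
abbreviation "vv t \<equiv> (\<Sum>k<d. PP t k * (hh t - lf t k)\<^sup>2)"

lemma PP_Suc: "PP (Suc t) = ah_weights d (LL (Suc t)) (DD t)"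
  by (simp add: ah_p_def)

lemma DD_Suc: "DD (Suc t) = DD t + (hh (Suc t) - mm (Suc t))"
  by (simp add: ah_p_def Let_def)

lemma LL_Suc: "(\<lambda>k. LL (Suc t) k + lf (Suc t) k) = LL (Suc (Suc t))"
  by (rule ext, subst cum_step) auto

lemma lbS: "t < T \<Longrightarrow> k < d \<Longrightarrow> 0 \<le> lf (Suc t) k \<and> lf (Suc t) k \<le> 1"
  using lb[of "Suc t" k] by auto

lemma inv: "t \<le> T \<Longrightarrow> DD t \<ge> 0 \<and> (DD t > 0 \<longrightarrow> d \<ge> 2) \<and> (DD t = 0 \<longrightarrow> (\<forall>k<d. LL (Suc t) k = LL (Suc t) 0))"
proof (induction t)
  case 0 then show ?case by (simp add: cum_loss_def)
next
  case (Suc t)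
  have tT: "t < T" using Suc.prems by simp
  then have "t \<le> T" by simp
  note I0 = Suc.IH[OF this]
  have IH: "DD t \<ge> 0" "DD t > 0 \<Longrightarrow> d \<ge> 2" "DD t = 0 \<Longrightarrow> \<forall>k<d. LL (Suc t) k = LL (Suc t) 0"
    using I0 by blast+
  show ?case
  proof (cases "DD t = 0")
    case True
    have lbs: "\<And>k. k<d \<Longrightarrow> 0 \<le> lf (Suc t) k \<and> lf (Suc t) k \<le> 1" using lbS tT by blast
    have Lc: "\<And>k. k < d \<Longrightarrow> LL (Suc t) k = LL (Suc t) 0" using IH(3)[OF True] by blast
    have eqs: "PP (Suc t) = ah_weights d (LL (Suc t)) 0" "mm (Suc t) = ah_mix d (PP (Suc t)) (lf (Suc t)) 0"
      using True by (simp_all add: PP_Suc)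
    have r1: "0 \<le> hh (Suc t) - mm (Suc t)" using round_zero(1)[where l="lf (Suc t)", OF d1 Lc lbs eqs(1) refl eqs(2) refl] by blast
    have r5: "hh (Suc t) - mm (Suc t) = 0 \<Longrightarrow> \<forall>k<d. LL (Suc (Suc t)) k = LL (Suc (Suc t)) 0"
    proof (intro allI impI)
      fix k assume k: "k < d" and z: "hh (Suc t) - mm (Suc t) = 0"
      have c: "LL (Suc (Suc t)) k = LL (Suc t) k + lf (Suc t) k" "LL (Suc (Suc t)) 0 = LL (Suc t) 0 + lf (Suc t) 0"
        by (simp_all add: cum_step)
      have e: "LL (Suc t) k + lf (Suc t) k = LL (Suc t) 0 + lf (Suc t) 0"
        using round_zero(5)[where l="lf (Suc t)", OF d1 Lc lbs eqs(1) refl eqs(2) refl z] k by blast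
      show "LL (Suc (Suc t)) k = LL (Suc (Suc t)) 0" by (simp only: c e)
    qed
    have r6: "d = 1 \<Longrightarrow> hh (Suc t) - mm (Suc t) = 0" using round_zero(6)[where l="lf (Suc t)", OF d1 Lc lbs eqs(1) refl eqs(2) refl] by blast
    have D: "DD (Suc t) = hh (Suc t) - mm (Suc t)" using True DD_Suc[of t] by simp
    show ?thesis
    proof (intro conjI impI)
      show "DD (Suc t) \<ge> 0" using D r1 by simp
      show "d \<ge> 2" if "DD (Suc t) > 0"
      proof (rule ccontr)
        assume "\<not> d \<ge> 2" then have "d = 1" using d1 by simp
        then show False using r6 D that by simp
      qed
      show "\<forall>k<d. LL (Suc (Suc t)) k = LL (Suc (Suc t)) 0" if "DD (Suc t) = 0"
      proof -
        have "hh (Suc t) - mm (Suc t) = 0" using D that by simp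
        then show ?thesis using r5 by blast
      qed
    qed
  next
    case False
    then have Dp: "DD t > 0" using IH(1) by simp
    have lbs: "\<And>k. k<d \<Longrightarrow> 0 \<le> lf (Suc t) k \<and> lf (Suc t) k \<le> 1" using lbS tT by blast
    note R = round_pos[where l="lf (Suc t)", OF IH(2)[OF Dp] Dp lbs PP_Suc refl refl refl]
    have "DD (Suc t) > 0" using R(1) Dp by (simp only: DD_Suc) simp
    then show ?thesis using IH(2)[OF Dp] by simp
  qed
qed

lemma rnd:
  assumes tT: "t < T"
  shows "0 \<le> hh (Suc t) - mm (Suc t)"
    "2*(hh (Suc t) - mm (Suc t))*DD t + (hh (Suc t) - mm (Suc t))\<^sup>2
       \<le> ln (real d) * vv (Suc t) + (2/3*ln (real d) + 1)*(hh (Suc t) - mm (Suc t))"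
    "mm (Suc t) = Phi d (DD t) (LL (Suc (Suc t))) - Phi d (DD t) (LL (Suc t))"
proof -
  have I: "DD t \<ge> 0" "DD t > 0 \<Longrightarrow> d \<ge> 2" "DD t = 0 \<Longrightarrow> \<forall>k<d. LL (Suc t) k = LL (Suc t) 0"
    using inv[of t] tT less_imp_le by blast+
  have "0 \<le> hh (Suc t) - mm (Suc t) \<and>
    2*(hh (Suc t) - mm (Suc t))*DD t + (hh (Suc t) - mm (Suc t))\<^sup>2
       \<le> ln (real d) * vv (Suc t) + (2/3*ln (real d) + 1)*(hh (Suc t) - mm (Suc t)) \<and>
    mm (Suc t) = Phi d (DD t) (LL (Suc (Suc t))) - Phi d (DD t) (LL (Suc t))"
  proof (cases "DD t = 0")
    case True
    have lbs: "\<And>k. k<d \<Longrightarrow> 0 \<le> lf (Suc t) k \<and> lf (Suc t) k \<le> 1" using lbS tT by blast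
    have Lc: "\<And>k. k < d \<Longrightarrow> LL (Suc t) k = LL (Suc t) 0" using I(3)[OF True] by blast
    have eqs: "PP (Suc t) = ah_weights d (LL (Suc t)) 0" "mm (Suc t) = ah_mix d (PP (Suc t)) (lf (Suc t)) 0"
      using True by (simp_all add: PP_Suc)
    note RR = round_zero(1)[where l="lf (Suc t)", OF d1 Lc lbs eqs(1) refl eqs(2) refl] round_zero(3)[where l="lf (Suc t)", OF d1 Lc lbs eqs(1) refl eqs(2) refl]
       round_zero(4)[where l="lf (Suc t)", OF d1 Lc lbs eqs(1) refl eqs(2) refl]
    show ?thesis using RR True LL_Suc[of t] by simp
  next
    case False
    then have Dp: "DD t > 0" using I(1) by simp
    have lbs: "\<And>k. k<d \<Longrightarrow> 0 \<le> lf (Suc t) k \<and> lf (Suc t) k \<le> 1" using lbS tT by blast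
    note R = round_pos[where l="lf (Suc t)", OF I(2)[OF Dp] Dp lbs PP_Suc refl refl refl]
    show ?thesis using R LL_Suc[of t] by simp
  qed
  then show "0 \<le> hh (Suc t) - mm (Suc t)"
    "2*(hh (Suc t) - mm (Suc t))*DD t + (hh (Suc t) - mm (Suc t))\<^sup>2
       \<le> ln (real d) * vv (Suc t) + (2/3*ln (real d) + 1)*(hh (Suc t) - mm (Suc t))"
    "mm (Suc t) = Phi d (DD t) (LL (Suc (Suc t))) - Phi d (DD t) (LL (Suc t))" by auto
qed


lemma Dsum: "DD n = (\<Sum>t=1..n. hh t - mm t)"
proof (induction n)
  case 0 then show ?case by simp
next
  case (Suc n)
  show ?case using Suc DD_Suc[of n] by simp
qed

lemma Msum: "n \<le> T \<Longrightarrow> (\<Sum>t=1..n. mm t) \<le> Phi d (DD n) (LL (Suc n))"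
proof (induction n)
  case 0
  have "LL 1 = (\<lambda>k. 0)" by (rule ext) (simp add: cum_loss_def)
  moreover have "(0::nat) \<in> {..<d}" using d1 by simp
  then have "(\<lambda>k::nat. 0::real) ` {..<d} = {0}" by auto
  ultimately show ?case by (simp add: Phi_def)
next
  case (Suc n)
  have tT: "n < T" using Suc.prems by simp
  have "(\<Sum>t=1..Suc n. mm t) = (\<Sum>t=1..n. mm t) + mm (Suc n)" by simp
  also have "\<dots> \<le> Phi d (DD n) (LL (Suc n)) + mm (Suc n)" using Suc by simp
  also have "\<dots> = Phi d (DD n) (LL (Suc (Suc n)))" using rnd(3)[OF tT] by simp
  also have "\<dots> \<le> Phi d (DD (Suc n)) (LL (Suc (Suc n)))"
  proof (rule Phi_mono)
    show "0 \<le> DD n" using inv[of n] tT by simp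
    show "DD n \<le> DD (Suc n)" using rnd(1)[OF tT] DD_Suc[of n] by simp
    show "DD (Suc n) > 0 \<Longrightarrow> d \<ge> 2" using inv[of "Suc n"] Suc.prems by blast
  qed
  finally show ?case .
qed

lemma regret: assumes i: "i < d" shows "(\<Sum>t=1..T. hh t) \<le> LL (Suc T) i + 2 * DD T"
proof -
  have "(\<Sum>t=1..T. hh t) = (\<Sum>t=1..T. hh t - mm t) + (\<Sum>t=1..T. mm t)"
    by (simp add: sum_subtractf)
  also have "\<dots> \<le> DD T + Phi d (DD T) (LL (Suc T))" using Msum[of T] Dsum[of T] by simp
  also have "Phi d (DD T) (LL (Suc T)) \<le> Min (LL (Suc T) ` {..<d}) + DD T"
  proof (cases "DD T = 0")
    case True then show ?thesis by (simp add: Phi_def)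
  next
    case False
    then have "DD T > 0" "d \<ge> 2" using inv[of T] by auto
    then show ?thesis using Phi_le_min by blast
  qed
  also have "Min (LL (Suc T) ` {..<d}) \<le> LL (Suc T) i" using i by simp
  finally show ?thesis by simp
qed

lemma Dsq: "n \<le> T \<Longrightarrow> (DD n)\<^sup>2 \<le> ln (real d) * (\<Sum>t=1..n. vv t) + (2/3 * ln (real d) + 1) * DD n"
proof (induction n)
  case 0 then show ?case by simp
next
  case (Suc n)
  have tT: "n < T" using Suc.prems by simp
  define \<delta> where "\<delta> = hh (Suc n) - mm (Suc n)"
  have DS: "DD (Suc n) = DD n + \<delta>" using DD_Suc[of n] by (simp add: \<delta>_def)
  have r: "2 * \<delta> * DD n + \<delta>\<^sup>2 \<le> ln (real d) * vv (Suc n) + (2/3*ln (real d) + 1) * \<delta>"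
    using rnd(2)[OF tT] by (simp add: \<delta>_def)
  have IH: "(DD n)\<^sup>2 \<le> ln (real d) * (\<Sum>t=1..n. vv t) + (2/3 * ln (real d) + 1) * DD n"
    using Suc by simp
  have "(DD (Suc n))\<^sup>2 = (DD n)\<^sup>2 + (2 * \<delta> * DD n + \<delta>\<^sup>2)" by (simp only: DS) (simp add: power2_eq_square algebra_simps)
  also have "\<dots> \<le> ln (real d) * (\<Sum>t=1..n. vv t) + (2/3 * ln (real d) + 1) * DD n
      + (ln (real d) * vv (Suc n) + (2/3*ln (real d) + 1) * \<delta>)" using IH r by linarith
  also have "\<dots> = ln (real d) * (\<Sum>t=1..Suc n. vv t) + (2/3 * ln (real d) + 1) * DD (Suc n)"
    by (simp only: DS sum.atLeast_Suc_atMost_Suc_shift) (simp add: algebra_simps)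
  finally show ?case .
qed

lemma final_bound:
  assumes i: "i < d" and e: "e > 0"
  shows "(\<Sum>t=1..T. hh t) - LL (Suc T) i \<le> ln (real d) / e + e * (\<Sum>t=1..T. vv t) + 4/3 * ln (real d) + 2"
proof -
  define V where "V = (\<Sum>t=1..T. vv t)"
  have V0: "V \<ge> 0" unfolding V_def
    by (intro sum_nonneg mult_nonneg_nonneg) (auto simp: ah_p_def weights_nonneg)
  have ld: "ln (real d) \<ge> 0" using d1 by simp
  have D0: "DD T \<ge> 0" using inv[of T] by simp
  have "DD T \<le> sqrt (ln (real d) * V) + (2/3 * ln (real d) + 1)"
    using sq_bound[OF D0 _ _ Dsq[of T, folded V_def]] ld V0 by simp
  moreover have "2 * sqrt (ln (real d) * V) \<le> ln (real d) / e + e * V"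
    by (rule amgm_eta[OF ld V0 e])
  ultimately show ?thesis using regret[OF i] unfolding V_def by linarith
qed

end

theorem mainTheorem9:
  fixes d T :: nat
    and ys :: "nat \<Rightarrow> nat \<Rightarrow> real"
    and y :: "nat \<Rightarrow> real"
    and c :: "nat \<Rightarrow> real"
    and i :: nat
  assumes d_pos: "d \<ge> 1"
    and preds: "\<And>t j. t \<in> {1..T} \<Longrightarrow> j < d \<Longrightarrow> ys t j \<in> {-1..1}"
    and labels: "\<And>t. t \<in> {1..T} \<Longrightarrow> y t \<in> {-1, 1}"
    and i_expert: "i < d"
  shows "(\<Sum>t=1..T. (1 - aha_b d ys y t) * clf_loss (y t) (aha_ystar d ys y t) + aha_b d ys y t * c t)
     \<le> (\<Sum>t=1..T. exp_loss ys y t i)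
        + (INF \<eta>\<in>{0<..}. ln (real d) / \<eta>
             + (\<Sum>t=1..T. (1 - aha_b d ys y t) * clf_loss (y t) (aha_ystar d ys y t)
                           + c t * aha_b d ys y t + \<eta> * aha_v d ys y t
                           - clf_loss (y t) (aha_yhat d ys y t)))
        + 4/3 * ln (real d) + 2"
proof -
  define lf where "lf = exp_loss ys y"
  have lb: "0 \<le> lf t k \<and> lf t k \<le> 1" if "t \<in> {1..T}" "k < d" for t k
  proof -
    have a: "-1 \<le> ys t k" "ys t k \<le> 1" using preds[OF that] by auto
    show ?thesis using labels[OF that(1)] a by (auto simp: lf_def exp_loss_def clf_loss_def)
  qed
  define H where "H = (\<Sum>t=1..T. ah_hedge d (ah_p d lf t) (lf t))"
  define V where "V = (\<Sum>t=1..T. (\<Sum>k<d. ah_p d lf t k * (ah_hedge d (ah_p d lf t) (lf t) - lf t k)\<^sup>2))"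
  define A where "A = (\<Sum>t=1..T. (1 - aha_b d ys y t) * clf_loss (y t) (aha_ystar d ys y t) + aha_b d ys y t * c t)"
  define Li where "Li = (\<Sum>t=1..T. exp_loss ys y t i)"
  have hedge: "clf_loss (y t) (aha_yhat d ys y t) = ah_hedge d (ah_p d lf t) (lf t)" for t
  proof -
    have p1: "(\<Sum>k<d. ah_p d lf t k) = 1" unfolding ah_p_def using weights_sum[OF d_pos] by simp
    have "clf_loss (y t) (aha_yhat d ys y t) = (\<Sum>k<d. ah_p d lf t k) / 2 - y t * (\<Sum>k<d. ah_p d lf t k * ys t k) / 2"
      using p1 by (simp add: clf_loss_def aha_yhat_def aha_p_def lf_def diff_divide_distrib)
    also have "\<dots> = (\<Sum>k<d. ah_p d lf t k / 2 - y t / 2 * (ah_p d lf t k * ys t k))"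
      by (simp add: sum_subtractf sum_divide_distrib[symmetric] sum_distrib_left[symmetric])
    also have "\<dots> = ah_hedge d (ah_p d lf t) (lf t)"
      unfolding ah_hedge_def
      by (intro sum.cong refl) (simp add: lf_def exp_loss_def clf_loss_def field_simps)
    finally show ?thesis .
  qed
  have vv: "aha_v d ys y t = (\<Sum>k<d. ah_p d lf t k * (ah_hedge d (ah_p d lf t) (lf t) - lf t k)\<^sup>2)" for t
    by (simp add: aha_v_def hedge aha_p_def lf_def)
  have Li: "cum_loss lf (Suc T) i = Li"
    by (simp add: cum_loss_def Li_def lf_def atLeastLessThanSuc_atLeastAtMost)
  have key: "H - Li \<le> ln (real d) / e + e * V + 4/3 * ln (real d) + 2" if "e > 0" for e
    using final_bound[where d=d and T=T and lf=lf, OF d_pos lb i_expert that] unfolding H_def V_def Li by simp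
  have "A - Li - 4/3 * ln (real d) - 2 \<le> (INF \<eta>\<in>{0<..}. ln (real d) / \<eta>
             + (\<Sum>t=1..T. (1 - aha_b d ys y t) * clf_loss (y t) (aha_ystar d ys y t)
                           + c t * aha_b d ys y t + \<eta> * aha_v d ys y t
                           - clf_loss (y t) (aha_yhat d ys y t)))"
  proof (rule cINF_greatest)
    show "{0<..} \<noteq> ({}::real set)" by auto
  next
    fix e :: real assume "e \<in> {0<..}"
    then have e: "e > 0" by simp
    have "(\<Sum>t=1..T. (1 - aha_b d ys y t) * clf_loss (y t) (aha_ystar d ys y t)
                           + c t * aha_b d ys y t + e * aha_v d ys y t
                           - clf_loss (y t) (aha_yhat d ys y t)) = A + e * V - H"
      by (simp add: A_def V_def H_def vv hedge sum.distrib sum_subtractf sum_distrib_left mult.commute)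
    then show "A - Li - 4/3 * ln (real d) - 2 \<le> ln (real d) / e
             + (\<Sum>t=1..T. (1 - aha_b d ys y t) * clf_loss (y t) (aha_ystar d ys y t)
                           + c t * aha_b d ys y t + e * aha_v d ys y t
                           - clf_loss (y t) (aha_yhat d ys y t))"
      using key[OF e] by simp
  qed
  then show ?thesis unfolding A_def[symmetric] Li_def[symmetric] by simp
qed

end
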